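(* Let $q,z$ be complex numbers with $|q|<1$ and $|z|<1$, with $-zq^{j}\neq 1$ for all $j\ge1$. Let $\theta(z;q)=\sum_{n=0}^\infty(-1)^nq^{n(n-1)/2}z^{n}$ be the partial theta function. Then $$\frac{(zq;q)_\infty}{(-zq;q)_\infty}+\sum_{n=0}^{\infty}\frac{(-1,z;q)_n}{(q,-zq;q)_n}(-z)^nq^{n^2+n}=\sum_{n=0}^{\infty}\frac{(-1,z;q)_n}{(q,-zq;q)_n}\big(1+q^n+zq^{n}-zq^{2n}\big)(-z)^nq^{n^2}\,\theta(z^2q^{2n+1};q^2).$$
   Context: $(x;q)_\infty=\prod_{j\ge0}(1-xq^j)$, $(x;q)_n=\prod_{j=0}^{n-1}(1-xq^j)$, and $(x_1,x_2;q)_n=(x_1;q)_n(x_2;q)_n$. *)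

theory Defs
  imports "HOL-Analysis.Analysis"
begin

definition qpoch :: "complex \<Rightarrow> complex \<Rightarrow> nat \<Rightarrow> complex" where
  "qpoch x q n = (\<Prod>j<n. 1 - x * q ^ j)"

definition qpoch_inf :: "complex \<Rightarrow> complex \<Rightarrow> complex" where
  "qpoch_inf x q = (\<Prod>j. 1 - x * q ^ j)"

definition partial_theta :: "complex \<Rightarrow> complex \<Rightarrow> complex" where
  "partial_theta z q = (\<Sum>n. (-1) ^ n * q ^ (n * (n - 1) div 2) * z ^ n)"

end

theory Submission
  imports Defs
begin
lemma qpoch_0 [simp]: "qpoch x q 0 = 1"
  by (simp add: qpoch_def)

lemma qpoch_Suc: "qpoch x q (Suc n) = qpoch x q n * (1 - x * q ^ n)"
  by (simp add: qpoch_def)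

lemma norm_qpoch_le:
  assumes "norm x \<le> 1" "norm q \<le> 1"
  shows "norm (qpoch x q n) \<le> 2 ^ n"
proof -
  have "norm (qpoch x q n) \<le> (\<Prod>j<n. norm (1 - x * q ^ j))"
    unfolding qpoch_def by (rule norm_prod_le)
  also have "\<dots> \<le> (\<Prod>j<n. (2::real))"
  proof (rule prod_mono)
    fix j assume "j \<in> {..<n}"
    have "norm (x * q ^ j) \<le> 1"
      using assms by (simp add: norm_mult norm_power mult_le_one power_le_one)
    hence "norm (1 - x * q ^ j) \<le> 2"
      using norm_triangle_ineq4[of 1 "x * q ^ j"] by simp
    thus "0 \<le> norm (1 - x * q ^ j) \<and> norm (1 - x * q ^ j) \<le> 2" by simp
  qed
  finally show ?thesis by simp
qed

lemma norm_qpoch_ge: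
  assumes "norm x \<le> r" "r < 1" "norm q \<le> 1"
  shows "(1 - r) ^ n \<le> norm (qpoch x q n)"
proof -
  have "(\<Prod>j<n. (1 - r)) \<le> (\<Prod>j<n. norm (1 - x * q ^ j))"
  proof (rule prod_mono)
    fix j assume "j \<in> {..<n}"
    have "norm (x * q ^ j) \<le> r"
      using assms by (simp add: norm_mult norm_power)
        (metis mult.commute mult_left_le norm_ge_zero power_le_one order_trans)
    hence "1 - r \<le> norm (1 - x * q ^ j)"
      using norm_triangle_ineq2[of 1 "x * q ^ j"] by simp
    thus "0 \<le> 1 - r \<and> 1 - r \<le> norm (1 - x * q ^ j)" using assms by simp
  qed
  also have "\<dots> = norm (qpoch x q n)"
    unfolding qpoch_def by (rule prod_norm)
  finally show ?thesis by simp
qed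

lemma qpoch_nonzero:
  assumes "norm x \<le> r" "r < 1" "norm q \<le> 1"
  shows "qpoch x q n \<noteq> 0"
proof -
  have "0 < (1 - r) ^ n" using assms by simp
  also have "\<dots> \<le> norm (qpoch x q n)" by (rule norm_qpoch_ge[OF assms])
  finally show ?thesis by auto
qed

lemma one_minus_nz: "norm (w::complex) < 1 \<Longrightarrow> 1 - w \<noteq> 0"
  by auto
lemma one_plus_nz: "norm (w::complex) < 1 \<Longrightarrow> 1 + w \<noteq> 0"
  by (metis add.inverse_unique norm_minus_cancel norm_one less_irrefl)


lemma summ_gauss:
  fixes t R :: real
  assumes "0 \<le> t" "t < 1" "0 \<le> R"
  shows "summable (\<lambda>k. R ^ k * t ^ (k\<^sup>2))"
proof -
  have "(\<lambda>N. R * t ^ N) \<longlonglongrightarrow> R * 0"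
    by (intro tendsto_intros LIMSEQ_power_zero) (use assms in auto)
  hence "eventually (\<lambda>N. R * t ^ N < 1/2) sequentially"
    by (intro order_tendstoD) auto
  then obtain N where N: "\<And>k. k \<ge> N \<Longrightarrow> R * t ^ k < 1/2"
    by (auto simp: eventually_sequentially)
  have "eventually (\<lambda>k. norm (R ^ k * t ^ (k\<^sup>2)) \<le> (1/2) ^ k) sequentially"
    unfolding eventually_sequentially
  proof (intro exI allI impI)
    fix k assume "k \<ge> N"
    have "norm (R ^ k * t ^ (k\<^sup>2)) = (R * t ^ k) ^ k"
      using assms by (simp add: power2_eq_square power_mult power_mult_distrib)
    also have "\<dots> \<le> (1/2) ^ k"
      using N[OF \<open>k \<ge> N\<close>] assms by (intro power_mono) auto
    finally show "norm (R ^ k * t ^ (k\<^sup>2)) \<le> (1/2) ^ k" .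
  qed
  thus ?thesis
    by (rule summable_comparison_test_ev) (simp add: summable_geometric)
qed

lemma wz_alg0:
  fixes z q a b C P Xm Ym d1 d2 d3 d4 d5 d6 :: complex
  assumes nz: "d1 \<noteq> 0" "d2 \<noteq> 0" "d3 \<noteq> 0" "d4 \<noteq> 0" "d5 \<noteq> 0" "d6 \<noteq> 0" "Ym \<noteq> 0"
  and eqs: "d1 = 1 - z" "d2 = 1 - z*a*b*q" "d3 = 1 - z*a^2*b*q" "d4 = 1 - z*a^2*b*q^2"
     "d5 = 1-a*q^2" "d6 = 1+z*a*q^2"
  shows "C*(1-z*a^2*q^2)/d1*(P*(a*q)) * ((1-a*b*q)*Xm/(Ym*d3*d4/d2)
            * ((1+z*a*b*q)/d2))
       - C*(1-z*a^2*q^2)/d1*(P*(a*q)) * (Xm*(1-b)/(Ym*d3))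
   = (- (a*b*q) * ((C*(1+a*q)*(1-z*a*q)/(d5*d6))*d5*d6/d1*((-z)*P*(a^2*q^2)))
         * (Xm*(1-b)) / (Ym*d3*d4))
     - (- (a*b*q) * (C*(1-a*q)*(1+z*a*q)/d1*P) * Xm / (Ym*d3))"
    (is "?T1 - ?T2 = ?T3 - ?T4")
proof -
  define E where "E = d1*Ym*d3*d4"
  have E: "E \<noteq> 0" using nz by (simp add: E_def)
  have 1: "?T1 * E = C*(1-z*a^2*q^2)*P*a*q*(1-a*b*q)*Xm*(1+z*a*b*q)"
    using nz by (simp add: E_def)
  have 2: "?T2 * E = C*(1-z*a^2*q^2)*P*a*q*Xm*(1-b)*d4"
    using nz by (simp add: E_def)
  have 3: "?T3 * E = -(a*b*q)*C*(1+a*q)*(1-z*a*q)*(-z)*P*a^2*q^2*Xm*(1-b)"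
    using nz by (simp add: E_def)
  have 4: "?T4 * E = -(a*b*q)*C*(1-a*q)*(1+z*a*q)*P*Xm*d4"
    using nz by (simp add: E_def)
  have "(?T1 - ?T2) * E = ?T1 * E - ?T2 * E" by (rule left_diff_distrib)
  also have "\<dots> = ?T3 * E - ?T4 * E"
    unfolding 1 2 3 4 unfolding eqs by (simp add: algebra_simps power2_eq_square)
  also have "\<dots> = (?T3 - ?T4) * E" by (rule left_diff_distrib[symmetric])
  finally have "(?T1 - ?T2) * E = (?T3 - ?T4) * E" .
  thus ?thesis using E by simp
qed

definition cc :: "complex \<Rightarrow> complex \<Rightarrow> nat \<Rightarrow> complex" where
  "cc z q n = qpoch (-1) q n * qpoch z q n / (qpoch q q n * qpoch (- z * q) q n)"

locale zq =
  fixes z q :: complex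
  assumes q1: "norm q < 1" and z1: "norm z < 1"
begin

lemma nz_zqk: "1 - z * q ^ k \<noteq> 0" "1 + z * q ^ k \<noteq> 0"
proof -
  have "norm (z * q ^ k) < 1"
  proof -
    have "norm q ^ k \<le> 1" using q1 by (simp add: power_le_one)
    hence "norm z * norm q ^ k \<le> norm z" by (simp add: mult_left_le)
    thus ?thesis using z1 by (simp add: norm_mult norm_power)
  qed
  thus "1 - z * q ^ k \<noteq> 0" "1 + z * q ^ k \<noteq> 0"
    using one_minus_nz one_plus_nz by auto
qed

lemma nz_qk: "k \<ge> 1 \<Longrightarrow> 1 - q ^ k \<noteq> 0"
proof -
  assume "k \<ge> 1"
  have "norm (q ^ k) < 1"
    using q1 \<open>k \<ge> 1\<close> by (simp add: norm_power power_less_one_iff)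
  thus ?thesis using one_minus_nz by auto
qed

lemma nz_1z: "1 - z \<noteq> 0"
  using z1 by auto

lemma nz_qq: "qpoch q q n \<noteq> 0"
  by (rule qpoch_nonzero[of q "norm q"]) (use q1 in auto)

lemma nz_zq: "qpoch (- z * q) q n \<noteq> 0"
proof (rule qpoch_nonzero[of _ "norm z"])
  show "norm (- z * q) \<le> norm z"
    using q1 by (simp add: norm_mult mult_left_le)
qed (use q1 z1 in auto)

lemma cc_0 [simp]: "cc z q 0 = 1"
  by (simp add: cc_def)

lemma cc_Suc: "cc z q (Suc n) = cc z q n * ((1 + q ^ n) * (1 - z * q ^ n)) /
    ((1 - q ^ Suc n) * (1 + z * q ^ Suc n))"
proof -
  have a: "1 - q ^ Suc n \<noteq> 0" by (rule nz_qk) simp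
  have b: "1 + z * q ^ Suc n \<noteq> 0" by (rule nz_zqk)
  show ?thesis
    using nz_qq[of n] nz_zq[of n] a b
    by (simp add: cc_def qpoch_Suc field_simps)
qed

definition RR :: real where "RR = 4 / ((1 - norm q) * (1 - norm z))"

lemma RR_pos: "RR > 0"
  using q1 z1 by (simp add: RR_def)

lemma norm_cc: "norm (cc z q n) \<le> RR ^ n"
proof -
  have n1: "norm (qpoch (-1) q n) \<le> 2 ^ n"
    by (rule norm_qpoch_le) (use q1 in auto)
  have n2: "norm (qpoch z q n) \<le> 2 ^ n"
    by (rule norm_qpoch_le) (use q1 z1 in auto)
  have d1: "(1 - norm q) ^ n \<le> norm (qpoch q q n)"
    by (rule norm_qpoch_ge) (use q1 in auto)
  have d2: "(1 - norm z) ^ n \<le> norm (qpoch (- z * q) q n)"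
    by (rule norm_qpoch_ge) (use q1 z1 in \<open>auto simp: norm_mult mult_left_le\<close>)
  have p1: "0 < (1 - norm q) ^ n" "0 < (1 - norm z) ^ n" using q1 z1 by auto
  have "norm (cc z q n) = norm (qpoch (-1) q n) * norm (qpoch z q n) /
      (norm (qpoch q q n) * norm (qpoch (- z * q) q n))"
    by (simp add: cc_def norm_mult norm_divide)
  also have "\<dots> \<le> (2 ^ n * 2 ^ n) / ((1 - norm q) ^ n * (1 - norm z) ^ n)"
  proof (rule frac_le)
    show "norm (qpoch (-1) q n) * norm (qpoch z q n) \<le> 2 ^ n * 2 ^ n"
      by (rule mult_mono[OF n1 n2]) auto
    show "(1 - norm q) ^ n * (1 - norm z) ^ n \<le> norm (qpoch q q n) * norm (qpoch (- z * q) q n)"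
      by (rule mult_mono[OF d1 d2]) (use p1 in auto)
  qed (use p1 in auto)
  also have "\<dots> = RR ^ n"
    by (simp add: RR_def power_divide power_mult_distrib flip: power_mult_distrib)
  finally show ?thesis .
qed

end

definition uu :: "complex \<Rightarrow> complex \<Rightarrow> nat \<Rightarrow> complex" where
  "uu z q n = cc z q n * (1 - z * q ^ (2 * n)) / (1 - z) * (- z) ^ n * q ^ (n\<^sup>2)"
definition vv :: "complex \<Rightarrow> complex \<Rightarrow> nat \<Rightarrow> complex" where
  "vv z q m = cc z q (Suc m) * (1 - q ^ Suc m) * (1 + z * q ^ Suc m) / (1 - z)
     * ((- z) ^ Suc m * q ^ (Suc m * m))"
definition XX :: "complex \<Rightarrow> nat \<Rightarrow> nat \<Rightarrow> complex" where
  "XX q N m = (\<Prod>j<m. 1 - q ^ (N - j))"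
definition YY :: "complex \<Rightarrow> complex \<Rightarrow> nat \<Rightarrow> nat \<Rightarrow> complex" where
  "YY z q N m = (\<Prod>j<m. 1 - z * q ^ (N + 1 + j))"
definition ww :: "complex \<Rightarrow> complex \<Rightarrow> nat \<Rightarrow> nat \<Rightarrow> complex" where
  "ww z q N n = uu z q n * XX q N n / YY z q N n"
definition gg :: "complex \<Rightarrow> complex \<Rightarrow> nat \<Rightarrow> nat \<Rightarrow> complex" where
  "gg z q N n = (case n of 0 \<Rightarrow> 0 | Suc m \<Rightarrow> (- (q ^ (N + 1))) * vv z q m * XX q N m / YY z q N (Suc m))"

lemma XX_0 [simp]: "XX q N 0 = 1" by (simp add: XX_def)
lemma YY_0 [simp]: "YY z q N 0 = 1" by (simp add: YY_def)
lemma XX_Suc: "XX q N (Suc m) = XX q N m * (1 - q ^ (N - m))"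
  by (simp add: XX_def)
lemma XX_SucSuc: "XX q (Suc N) (Suc m) = (1 - q ^ Suc N) * XX q N m"
  unfolding XX_def by (subst prod.lessThan_Suc_shift) simp
lemma XX_zero: assumes "N < m" shows "XX q N m = 0"
  unfolding XX_def using assms by (intro prod_zero) (auto intro!: bexI[of _ N])
lemma YY_Suc: "YY z q N (Suc m) = YY z q N m * (1 - z * q ^ (N + 1 + m))"
  by (simp add: YY_def)
lemma YY_shift: "YY z q N (Suc m) = (1 - z * q ^ (N + 1)) * YY z q (Suc N) m"
  unfolding YY_def by (subst prod.lessThan_Suc_shift) simp

context zq begin

lemma YY_nz: "YY z q N m \<noteq> 0"
proof -
  have "\<And>j. 1 - z * q ^ (N + 1 + j) \<noteq> 0" by (rule nz_zqk)
  thus ?thesis unfolding YY_def by (subst prod_zero_iff) auto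
qed

lemma uu_0 [simp]: "uu z q 0 = 1"
  using nz_1z by (simp add: uu_def)

lemma vv_0: "vv z q 0 = - 2 * z"
proof -
  have "(2 - 2 * z) * z = (2 * z) * (1 - z)" by (simp add: algebra_simps)
  hence "(2 - 2 * z) * z / (1 - z) = 2 * z" using nz_1z by (simp add: divide_eq_eq)
  thus ?thesis
    using nz_1z nz_qk[of 1] nz_zqk(2)[of 1] by (simp add: vv_def cc_Suc)
qed

lemma wz_eq: "ww z q (Suc N) n * ((1 + z * q ^ Suc N) / (1 - z * q ^ Suc N)) - ww z q N n
   = gg z q N (Suc n) - gg z q N n"
proof (cases n)
  case 0
  have d: "1 - z * q ^ Suc N \<noteq> 0" by (rule nz_zqk)
  show ?thesis using 0 d
    by (simp add: ww_def gg_def vv_0 YY_def field_simps)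
next
  case (Suc m)
  show ?thesis
  proof (cases "N < m")
    case True
    thus ?thesis using Suc
      by (simp add: ww_def gg_def XX_zero)
  next
    case False
    hence mN: "m \<le> N" by simp
    define a where "a = q ^ m"
    define b where "b = q ^ (N - m)"
    have qN: "q ^ N = a * b" unfolding a_def b_def
      using mN by (simp flip: power_add)
    have p1: "q ^ Suc N = a * b * q" using qN by simp
    have p1': "q ^ (N + 1) = a * b * q" using p1 by simp
    have p2: "q ^ (N + 1 + m) = a^2 * b * q"
      using qN by (simp add: power_add power2_eq_square a_def)
    have p3: "q ^ (N + 1 + Suc m) = a^2 * b * q^2"
      using qN by (simp add: power_add power2_eq_square a_def)
    have p4: "q ^ (2 * Suc m) = a^2 * q^2"
      unfolding a_def mult_2 power_add by (simp add: power2_eq_square)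
    have p5: "q ^ Suc m = a * q" by (simp add: a_def)
    have p6: "q ^ Suc (Suc m) = a * q^2" by (simp add: a_def power2_eq_square)
    have p7: "q ^ ((Suc m)\<^sup>2) = q ^ (Suc m * m) * (a * q)"
      by (simp add: a_def power2_eq_square ac_simps flip: power_add)
    have p8: "q ^ (Suc (Suc m) * Suc m) = q ^ (Suc m * m) * (a^2 * q^2)"
    proof -
      have e: "Suc (Suc m) * Suc m = Suc m * m + (m + m + 2)" by simp
      show ?thesis unfolding e power_add a_def by (simp add: power2_eq_square)
    qed
    define C where "C = cc z q (Suc m)"
    define P where "P = (- z) ^ Suc m * q ^ (Suc m * m)"
    define Xm where "Xm = XX q N m"
    define Ym where "Ym = YY z q N m"
    have uS: "uu z q (Suc m) = C*(1-z*a^2*q^2)/(1-z)*(P*(a*q))"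
      unfolding uu_def C_def P_def using p4 p7 by simp
    have vm: "vv z q m = C*(1-a*q)*(1+z*a*q)/(1-z)*P"
      unfolding vv_def C_def P_def p5 by (simp add: mult.assoc)
    have vS: "vv z q (Suc m) = (C*(1+a*q)*(1-z*a*q)/((1-a*q^2)*(1+z*a*q^2)))*(1-a*q^2)*(1+z*a*q^2)/(1-z)*((-z)*P*(a^2*q^2))"
      unfolding vv_def C_def P_def cc_Suc[of "Suc m"] p5 p6 p8 by (simp add: mult_ac)
    have X1: "XX q (Suc N) (Suc m) = (1-a*b*q)*Xm"
      unfolding Xm_def XX_SucSuc p1 ..
    have X2: "XX q N (Suc m) = Xm*(1-b)"
      unfolding Xm_def XX_Suc b_def ..
    have Y1: "YY z q N (Suc m) = Ym*(1-z*a^2*b*q)"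
      unfolding Ym_def YY_Suc p2 by (simp add: mult.assoc)
    have Y2: "YY z q N (Suc (Suc m)) = Ym*(1-z*a^2*b*q)*(1-z*a^2*b*q^2)"
      unfolding Ym_def YY_Suc p2 p3 by (simp add: mult.assoc)
    have Y3: "YY z q (Suc N) (Suc m) = Ym*(1-z*a^2*b*q)*(1-z*a^2*b*q^2)/(1-z*a*b*q)"
    proof -
      have "YY z q N (Suc (Suc m)) = (1 - z*a*b*q) * YY z q (Suc N) (Suc m)"
        by (subst YY_shift) (simp add: qN mult.assoc)
      moreover have "1 - z*a*b*q \<noteq> 0" using nz_zqk(1)[of "Suc N", unfolded p1] by (simp add: mult.assoc)
      ultimately show ?thesis using Y2 by (simp add: field_simps)
    qed
    have lhs: "ww z q (Suc N) n * ((1 + z * q ^ Suc N) / (1 - z * q ^ Suc N)) - ww z q N n =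
      C*(1-z*a^2*q^2)/(1-z)*(P*(a*q)) * ((1-a*b*q)*Xm/(Ym*(1-z*a^2*b*q)*(1-z*a^2*b*q^2)/(1-z*a*b*q))
            * ((1+z*a*b*q)/(1-z*a*b*q)))
       - C*(1-z*a^2*q^2)/(1-z)*(P*(a*q)) * (Xm*(1-b)/(Ym*(1-z*a^2*b*q)))"
      unfolding Suc ww_def uS X1 X2 Y1 Y3 p1 by (simp add: mult.assoc)
    have rhs: "gg z q N (Suc n) - gg z q N n =
      (- (a*b*q) * ((C*(1+a*q)*(1-z*a*q)/((1-a*q^2)*(1+z*a*q^2)))*(1-a*q^2)*(1+z*a*q^2)/(1-z)*((-z)*P*(a^2*q^2)))
         * (Xm*(1-b)) / (Ym*(1-z*a^2*b*q)*(1-z*a^2*b*q^2)))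
     - (- (a*b*q) * (C*(1-a*q)*(1+z*a*q)/(1-z)*P) * Xm / (Ym*(1-z*a^2*b*q)))"
      unfolding Suc gg_def nat.case vS vm X2 Y1 Y2 p1' Xm_def[symmetric] ..
    show ?thesis unfolding lhs rhs
    proof (rule wz_alg0)
      show "1 - z \<noteq> 0" by (rule nz_1z)
      show "1 - z*a*b*q \<noteq> 0" using nz_zqk(1)[of "Suc N", unfolded p1] by (simp add: mult.assoc)
      show "1 - z*a^2*b*q \<noteq> 0" using nz_zqk(1)[of "N+1+m", unfolded p2] by (simp add: mult.assoc)
      show "1 - z*a^2*b*q^2 \<noteq> 0" using nz_zqk(1)[of "N+1+Suc m", unfolded p3] by (simp add: mult.assoc)
      show "1 - a*q^2 \<noteq> 0" using nz_qk[of "Suc (Suc m)", unfolded p6] by simp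
      show "1 + z*a*q^2 \<noteq> 0" using nz_zqk(2)[of "Suc (Suc m)", unfolded p6] by (simp add: mult.assoc)
      show "Ym \<noteq> 0" unfolding Ym_def by (rule YY_nz)
    qed auto
  qed
qed

end

lemma qpoch_lim:
  fixes x q :: complex
  assumes "norm q < 1"
  shows "convergent_prod (\<lambda>j. 1 - x * q ^ j)" "(\<lambda>N. qpoch x q N) \<longlonglongrightarrow> qpoch_inf x q"
proof -
  have "summable (\<lambda>i. norm ((1 - x * q ^ i) - 1))"
    using assms by (simp add: norm_mult norm_power summable_mult summable_geometric)
  hence cp: "convergent_prod (\<lambda>j. 1 - x * q ^ j)"
    by (intro abs_convergent_prod_imp_convergent_prod summable_imp_abs_convergent_prod)
  thus "convergent_prod (\<lambda>j. 1 - x * q ^ j)" .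
  have "(\<lambda>n. \<Prod>i\<le>n. 1 - x * q ^ i) \<longlonglongrightarrow> qpoch_inf x q"
    unfolding qpoch_inf_def by (rule convergent_prod_LIMSEQ[OF cp])
  thus "(\<lambda>N. qpoch x q N) \<longlonglongrightarrow> qpoch_inf x q"
    unfolding qpoch_def using LIMSEQ_lessThan_iff_atMost[of "prod (\<lambda>i. 1 - x * q ^ i)"] by simp
qed

lemma pow_lim:
  fixes q :: complex
  assumes "norm q < 1" "filterlim f sequentially sequentially"
  shows "(\<lambda>N. q ^ f N) \<longlonglongrightarrow> 0"
  using filterlim_compose[OF LIMSEQ_power_zero[OF assms(1)] assms(2)] by simp

context zq begin

lemma fin_id: "(\<Sum>n<Suc N. ww z q N n) = qpoch (z * q) q N / qpoch (- z * q) q N"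
proof (induction N)
  case 0
  show ?case by (simp add: ww_def)
next
  case (Suc N)
  define k where "k = (1 + z * q ^ Suc N) / (1 - z * q ^ Suc N)"
  have d1: "1 - z * q ^ Suc N \<noteq> 0" "1 + z * q ^ Suc N \<noteq> 0" by (rule nz_zqk)+
  have k0: "k \<noteq> 0" using d1 by (simp add: k_def)
  have "(\<Sum>n<Suc (Suc N). ww z q (Suc N) n) * k = (\<Sum>n<Suc (Suc N). ww z q (Suc N) n * k)"
    by (rule sum_distrib_right)
  also have "\<dots> = (\<Sum>n<Suc (Suc N). ww z q N n + (gg z q N (Suc n) - gg z q N n))"
    by (intro sum.cong refl) (use wz_eq[of N] in \<open>simp add: k_def algebra_simps\<close>)
  also have "\<dots> = (\<Sum>n<Suc (Suc N). ww z q N n) + (gg z q N (Suc (Suc N)) - gg z q N 0)"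
    by (simp only: sum.distrib sum_lessThan_telescope)
  also have "gg z q N (Suc (Suc N)) = 0"
    by (simp add: gg_def XX_zero)
  also have "gg z q N 0 = 0" by (simp add: gg_def)
  also have "(\<Sum>n<Suc (Suc N). ww z q N n) = (\<Sum>n<Suc N. ww z q N n)"
    by (simp add: ww_def XX_zero)
  finally have eq: "(\<Sum>n<Suc (Suc N). ww z q (Suc N) n) * k = qpoch (z * q) q N / qpoch (- z * q) q N"
    using Suc.IH by simp
  have "(\<Sum>n<Suc (Suc N). ww z q (Suc N) n) = qpoch (z * q) q N / qpoch (- z * q) q N / k"
    using nonzero_eq_divide_eq[OF k0] eq by blast
  also have "\<dots> = qpoch (z * q) q (Suc N) / qpoch (- z * q) q (Suc N)"
    using d1 nz_zq[of N] by (simp add: k_def qpoch_Suc field_simps)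
  finally show ?case .
qed


lemma norm_XX: "norm (XX q N k) \<le> 2 ^ k"
proof -
  have "norm (XX q N k) \<le> (\<Prod>j<k. norm (1 - q ^ (N - j)))"
    unfolding XX_def by (rule norm_prod_le)
  also have "\<dots> \<le> (\<Prod>j<k. (2::real))"
  proof (rule prod_mono)
    fix j assume "j \<in> {..<k}"
    have "norm (q ^ (N - j)) \<le> 1"
      using q1 by (simp add: norm_power power_le_one)
    hence "norm (1 - q ^ (N - j)) \<le> 2"
      using norm_triangle_ineq4[of 1 "q ^ (N - j)"] by simp
    thus "0 \<le> norm (1 - q ^ (N - j)) \<and> norm (1 - q ^ (N - j)) \<le> 2" by simp
  qed
  finally show ?thesis by simp
qed

lemma norm_YY: "(1 - norm z) ^ k \<le> norm (YY z q N k)"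
proof -
  have "(\<Prod>j<k. (1 - norm z)) \<le> (\<Prod>j<k. norm (1 - z * q ^ (N + 1 + j)))"
  proof (rule prod_mono)
    fix j assume "j \<in> {..<k}"
    have "norm q ^ (N + 1 + j) \<le> 1" by (rule power_le_one) (use q1 in auto)
    hence "norm (z * q ^ (N + 1 + j)) \<le> norm z"
      by (simp add: norm_mult norm_power mult_left_le)
    hence "1 - norm z \<le> norm (1 - z * q ^ (N + 1 + j))"
      using norm_triangle_ineq2[of 1 "z * q ^ (N + 1 + j)"] by simp
    thus "0 \<le> 1 - norm z \<and> 1 - norm z \<le> norm (1 - z * q ^ (N + 1 + j))" using z1 by simp
  qed
  also have "\<dots> = norm (YY z q N k)"
    unfolding YY_def by (rule prod_norm)
  finally show ?thesis by simp
qed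

definition KK :: real where "KK = 2 / norm (1 - z)"

lemma norm_uu: "norm (uu z q k) \<le> KK * RR ^ k * norm q ^ (k\<^sup>2)"
proof -
  have a: "norm (1 - z * q ^ (2 * k)) \<le> 2"
  proof -
    have "norm (z * q ^ (2 * k)) \<le> 1"
      using q1 z1 by (simp add: norm_mult norm_power mult_le_one power_le_one)
    thus ?thesis using norm_triangle_ineq4[of 1 "z * q ^ (2 * k)"] by simp
  qed
  have b: "norm ((- z) ^ k) \<le> 1"
    using z1 by (simp add: norm_power power_le_one)
  have "norm (uu z q k) = norm (cc z q k) * norm (1 - z * q ^ (2 * k)) / norm (1 - z) * norm ((- z) ^ k) * norm q ^ (k\<^sup>2)"
    by (simp add: uu_def norm_mult norm_divide norm_power)
  also have "\<dots> \<le> RR ^ k * 2 / norm (1 - z) * 1 * norm q ^ (k\<^sup>2)"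
    by (intro mult_mono divide_right_mono norm_cc a b)
      (use RR_pos[THEN less_imp_le] in \<open>auto intro!: mult_nonneg_nonneg divide_nonneg_nonneg\<close>)
  also have "\<dots> = KK * RR ^ k * norm q ^ (k\<^sup>2)"
    by (simp add: KK_def)
  finally show ?thesis .
qed

definition SS :: real where "SS = RR * (2 / (1 - norm z))"

lemma SS_pos: "SS > 0" using RR_pos z1 by (simp add: SS_def)
lemma KK_pos: "KK > 0" using nz_1z by (simp add: KK_def)

lemma summable_bound: "summable (\<lambda>k. KK * SS ^ k * norm q ^ (k\<^sup>2))"
proof -
  have "summable (\<lambda>k. SS ^ k * norm q ^ (k\<^sup>2))"
    by (rule summ_gauss) (use q1 SS_pos in auto)
  hence "summable (\<lambda>k. KK * (SS ^ k * norm q ^ (k\<^sup>2)))" by (rule summable_mult)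
  thus ?thesis by (simp add: mult.assoc)
qed

lemma norm_ww: "norm (ww z q N k) \<le> KK * SS ^ k * norm q ^ (k\<^sup>2)"
proof -
  have p: "0 < (1 - norm z) ^ k" using z1 by simp
  have "norm (ww z q N k) = norm (uu z q k) * norm (XX q N k) / norm (YY z q N k)"
    by (simp add: ww_def norm_mult norm_divide)
  also have "\<dots> \<le> (KK * RR ^ k * norm q ^ (k\<^sup>2)) * 2 ^ k / (1 - norm z) ^ k"
    by (intro frac_le mult_mono norm_uu norm_XX norm_YY p)
      (use RR_pos[THEN less_imp_le] KK_pos[THEN less_imp_le] in \<open>auto intro!: mult_nonneg_nonneg\<close>)
  also have "\<dots> = KK * SS ^ k * norm q ^ (k\<^sup>2)"
    by (simp add: SS_def power_mult_distrib power_divide)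
  finally show ?thesis .
qed

lemma summable_uu: "summable (uu z q)"
proof (rule summable_comparison_test)
  show "\<exists>N. \<forall>n\<ge>N. norm (uu z q n) \<le> KK * SS ^ n * norm q ^ (n\<^sup>2)"
  proof (intro exI allI impI)
    fix n :: nat
    have "KK * RR ^ n * norm q ^ (n\<^sup>2) \<le> KK * SS ^ n * norm q ^ (n\<^sup>2)"
    proof (intro mult_right_mono mult_left_mono power_mono)
      show "RR \<le> SS" unfolding SS_def using RR_pos z1 by (simp add: field_simps)
    qed (use RR_pos KK_pos in auto)
    thus "norm (uu z q n) \<le> KK * SS ^ n * norm q ^ (n\<^sup>2)"
      using norm_uu[of n] by linarith
  qed
qed (rule summable_bound)

lemma ww_lim: "(\<lambda>N. ww z q N k) \<longlonglongrightarrow> uu z q k"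
proof -
  have X: "(\<lambda>N. XX q N k) \<longlonglongrightarrow> (\<Prod>j<k. 1 - 0)"
    unfolding XX_def
    by (intro tendsto_prod tendsto_diff tendsto_const pow_lim[OF q1] filterlim_minus_const_nat_at_top)
  have Y: "(\<lambda>N. YY z q N k) \<longlonglongrightarrow> (\<Prod>j<k. 1 - z * 0)"
  proof -
    have "filterlim (\<lambda>N. N + 1 + j) sequentially sequentially" for j :: nat
      using filterlim_add_const_nat_at_top[of "1 + j"] by (simp add: add.assoc)
    thus ?thesis unfolding YY_def
      by (intro tendsto_prod tendsto_diff tendsto_const tendsto_mult pow_lim[OF q1])
  qed
  have "(\<lambda>N. uu z q k * XX q N k / YY z q N k) \<longlonglongrightarrow> uu z q k * 1 / 1"
    using X Y by (intro tendsto_intros) auto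
  thus ?thesis by (simp add: ww_def)
qed

lemma sum_uu: "suminf (uu z q) = qpoch_inf (z * q) q / qpoch_inf (- z * q) q"
proof -
  have T: "((\<lambda>N. suminf (\<lambda>k. ww z q N k)) \<longlonglongrightarrow> suminf (uu z q))"
    using tannerys_theorem[of "\<lambda>k N. ww z q N k" "uu z q" sequentially "\<lambda>k. KK * SS ^ k * norm q ^ (k\<^sup>2)"]
      ww_lim norm_ww summable_bound by (auto intro: always_eventually)
  have fin: "suminf (\<lambda>k. ww z q N k) = (\<Sum>k<Suc N. ww z q N k)" for N
    by (rule suminf_finite) (auto simp: ww_def XX_zero)
  have T2: "(\<lambda>N. qpoch (z * q) q N / qpoch (- z * q) q N) \<longlonglongrightarrow> suminf (uu z q)"
    using T unfolding fin fin_id .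
  have nz: "qpoch_inf (- z * q) q \<noteq> 0"
    unfolding qpoch_inf_def
  proof (rule prodinf_nonzero)
    show "convergent_prod (\<lambda>j. 1 - - z * q * q ^ j)" by (rule qpoch_lim(1)[OF q1])
    show "1 - - z * q * q ^ i \<noteq> 0" for i
      using nz_zqk(2)[of "Suc i"] by (simp add: mult.assoc)
  qed
  have T3: "(\<lambda>N. qpoch (z * q) q N / qpoch (- z * q) q N) \<longlonglongrightarrow> qpoch_inf (z * q) q / qpoch_inf (- z * q) q"
    by (intro tendsto_divide qpoch_lim(2)[OF q1] nz)
  show ?thesis using LIMSEQ_unique[OF T2 T3] .
qed

end

lemma tri_div: "Suc n * (Suc n - 1) div 2 = n * (n - 1) div 2 + n"
  by (induction n) (auto simp: algebra_simps)

lemma pt_summable: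
  fixes x p :: complex
  assumes "norm x < 1" "norm p \<le> 1"
  shows "summable (\<lambda>n. (-1) ^ n * p ^ (n * (n - 1) div 2) * x ^ n)"
proof (rule summable_comparison_test)
  show "\<exists>N. \<forall>n\<ge>N. norm ((-1) ^ n * p ^ (n * (n - 1) div 2) * x ^ n) \<le> norm x ^ n"
    using assms by (auto simp: norm_mult norm_power power_le_one intro!: mult_left_le_one_le)
qed (use assms in \<open>simp add: summable_geometric\<close>)

lemma pt_feq:
  fixes x p :: complex
  assumes "norm x < 1" "norm p \<le> 1"
  shows "partial_theta x p = 1 - x * partial_theta (x * p) p"
proof -
  define f where "f n = (-1) ^ n * p ^ (n * (n - 1) div 2) * x ^ n" for n
  define g where "g n = (-1) ^ n * p ^ (n * (n - 1) div 2) * (x * p) ^ n" for n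
  have sf: "summable f" unfolding f_def by (rule pt_summable[OF assms])
  have nxp: "norm (x * p) < 1"
    using assms by (simp add: norm_mult) (metis mult_left_le order_le_less_trans norm_ge_zero)
  have sg: "summable g" unfolding g_def by (rule pt_summable[OF nxp assms(2)])
  have fs: "f (Suc n) = - x * g n" for n
    unfolding f_def g_def tri_div by (simp add: power_add power_mult_distrib)
  have "suminf f = (\<Sum>n. f (Suc n)) + f 0" using suminf_split_head[OF sf] by simp
  also have "(\<Sum>n. f (Suc n)) = (\<Sum>n. - x * g n)" by (simp only: fs)
  also have "\<dots> = - x * suminf g" by (rule suminf_mult[OF sg])
  moreover have "f 0 = 1" by (simp add: f_def)
  ultimately have "suminf f = 1 - x * suminf g" by simp
  moreover have "partial_theta x p = suminf f" by (simp add: partial_theta_def f_def[abs_def])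
  moreover have "partial_theta (x * p) p = suminf g" by (simp add: partial_theta_def g_def[abs_def])
  ultimately show ?thesis by simp
qed

lemma pt_bound:
  fixes x p :: complex
  assumes "norm x \<le> r" "r < 1" "norm p \<le> 1"
  shows "norm (partial_theta x p) \<le> 1 / (1 - r)"
proof -
  define f where "f n = (-1) ^ n * p ^ (n * (n - 1) div 2) * x ^ n" for n
  have nf: "norm (f n) \<le> r ^ n" for n
  proof -
    have "norm (f n) \<le> norm x ^ n"
      using assms by (auto simp: f_def norm_mult norm_power power_le_one intro!: mult_left_le_one_le)
    also have "\<dots> \<le> r ^ n" using assms by (intro power_mono) auto
    finally show ?thesis .
  qed
  have r0: "0 \<le> r" using assms(1) norm_ge_zero order_trans by blast
  have sr: "summable (\<lambda>n. r ^ n)" using assms r0 by (intro summable_geometric) auto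
  have snf: "summable (\<lambda>n. norm (f n))"
    by (rule summable_comparison_test[OF _ sr]) (use nf in auto)
  have "norm (partial_theta x p) = norm (suminf f)" by (simp add: partial_theta_def f_def[abs_def])
  also have "\<dots> \<le> (\<Sum>n. norm (f n))" by (rule summable_norm[OF snf])
  also have "\<dots> \<le> (\<Sum>n. r ^ n)" by (rule suminf_le[OF nf snf sr])
  also have "\<dots> = 1 / (1 - r)" using assms r0 by (simp add: suminf_geometric)
  finally show ?thesis .
qed

definition ee :: "complex \<Rightarrow> complex \<Rightarrow> nat \<Rightarrow> complex" where
  "ee z q n = cc z q n * (1 + q ^ n) * (1 - z * q ^ n) / (1 - z) * (- z) ^ n * q ^ (n\<^sup>2)"
definition ss :: "complex \<Rightarrow> complex \<Rightarrow> nat \<Rightarrow> complex" where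
  "ss z q n = cc z q n * (- z) ^ n * q ^ (n\<^sup>2 + n)"
definition AA :: "complex \<Rightarrow> complex \<Rightarrow> nat \<Rightarrow> complex" where
  "AA z q n = cc z q n * (1 + q ^ n + z * q ^ n - z * q ^ (2 * n)) * (- z) ^ n * q ^ (n\<^sup>2)"
definition TT :: "complex \<Rightarrow> complex \<Rightarrow> nat \<Rightarrow> complex" where
  "TT z q n = partial_theta (z\<^sup>2 * q ^ (2 * n + 1)) (q\<^sup>2)"

lemma AA_alg:
  fixes z a q C W d1 d2 d3 :: complex
  assumes nz: "d1 \<noteq> 0" "d2 \<noteq> 0" "d3 \<noteq> 0"
  and eqs: "d1 = 1 - z" "d2 = 1 - a * q" "d3 = 1 + z * a * q"
  shows "C * ((1 + a) * (1 - z * a)) / (d2 * d3) * (1 + a * q + z * (a * q) - z * (a * q * (a * q))) * ((- z) * W) * (W' * (a * a * q))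
    = C * ((1 + a) * (1 - z * a)) / (d2 * d3) * (1 + a * q) * (1 - z * (a * q)) / d1 * ((- z) * W) * (W' * (a * a * q))
      + z\<^sup>2 * (a * a * q) * (C * (1 + a) * (1 - z * a) / d1 * W * W')"
    (is "?L = ?R1 + ?R2")
proof -
  define E where "E = d1 * d2 * d3"
  have E: "E \<noteq> 0" using nz by (simp add: E_def)
  have 1: "?L * E = C * ((1 + a) * (1 - z * a)) * (1 + a * q + z * (a * q) - z * (a * q * (a * q))) * ((- z) * W) * (W' * (a * a * q)) * d1"
    using nz by (simp add: E_def)
  have 2: "?R1 * E = C * ((1 + a) * (1 - z * a)) * (1 + a * q) * (1 - z * (a * q)) * ((- z) * W) * (W' * (a * a * q))"
    using nz by (simp add: E_def)
  have 3: "?R2 * E = z\<^sup>2 * (a * a * q) * (C * (1 + a) * (1 - z * a) * W * W') * d2 * d3"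
    using nz by (simp add: E_def)
  have "?L * E = ?R1 * E + ?R2 * E"
    unfolding 1 2 3 unfolding eqs by (simp add: algebra_simps power2_eq_square)
  also have "\<dots> = (?R1 + ?R2) * E" by (rule distrib_right[symmetric])
  finally show ?thesis using E mult_cancel_right[of ?L E "?R1 + ?R2"] by blast
qed

context zq begin

lemma ee_split: "ee z q n = ss z q n + uu z q n"
proof -
  have "ee z q n - ss z q n - uu z q n = cc z q n * (- z) ^ n * q ^ (n\<^sup>2) *
      (((1 + q ^ n) * (1 - z * q ^ n) - (1 - z * q ^ (2 * n))) / (1 - z) - q ^ n)"
    by (simp add: ee_def ss_def uu_def power_add algebra_simps diff_divide_distrib add_divide_distrib)
  also have "((1 + q ^ n) * (1 - z * q ^ n) - (1 - z * q ^ (2 * n))) = q ^ n * (1 - z)"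
  proof -
    have q2: "q ^ (2 * n) = q ^ n * q ^ n" by (simp add: mult_2 power_add)
    show ?thesis unfolding q2 by (simp add: algebra_simps)
  qed
  also have "q ^ n * (1 - z) / (1 - z) - q ^ n = 0" using nz_1z by simp
  finally have "ee z q n - ss z q n - uu z q n = 0" by simp
  thus ?thesis by (simp add: algebra_simps)
qed

lemma AA_0: "AA z q 0 = ee z q 0"
proof -
  have "(2 - 2 * z) / (1 - z) = 2" using nz_1z by (simp add: divide_eq_eq algebra_simps)
  thus ?thesis using nz_1z by (simp add: AA_def ee_def)
qed

lemma AA_Suc: "AA z q (Suc n) = ee z q (Suc n) + z\<^sup>2 * q ^ (2 * n + 1) * ee z q n"
proof -
  define a where "a = q ^ n"
  have e1: "q ^ Suc n = a * q" by (simp add: a_def)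
  have e2: "q ^ (2 * Suc n) = a * q * (a * q)" by (simp add: a_def mult_2 power_add)
  have e3: "q ^ ((Suc n)\<^sup>2) = q ^ (n\<^sup>2) * (a * a * q)"
  proof -
    have "(Suc n)\<^sup>2 = n\<^sup>2 + (n + n + 1)" by (simp add: power2_eq_square)
    thus ?thesis by (simp add: a_def power_add)
  qed
  have e4: "q ^ (2 * n + 1) = a * a * q" by (simp add: a_def mult_2 power_add)
  have f1: "1 - a * q \<noteq> 0" using nz_qk[of "Suc n"] by (simp add: a_def mult.commute)
  have f2: "1 + z * a * q \<noteq> 0" using nz_zqk(2)[of "Suc n"] by (simp add: a_def ac_simps)
  have cS: "cc z q (Suc n) = cc z q n * ((1 + a) * (1 - z * a)) / ((1 - a * q) * (1 + z * a * q))"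
    unfolding cc_Suc e1 a_def by (simp add: mult.assoc)
  show ?thesis
    unfolding AA_def ee_def cS e1 e2 e3 e4 power_Suc[of "- z"]
    apply (fold a_def)
    apply (rule AA_alg[of "1 - z" "1 - a * q" "1 + z * a * q"])
    using nz_1z f1 f2 by auto
qed

end

context zq begin

lemma nx: "norm (z\<^sup>2 * q ^ k) \<le> norm z ^ 2" "norm z ^ 2 < 1" "norm (q\<^sup>2) \<le> 1"
proof -
  have "norm q ^ k \<le> 1" by (rule power_le_one) (use q1 in auto)
  thus "norm (z\<^sup>2 * q ^ k) \<le> norm z ^ 2"
    by (simp add: norm_mult norm_power mult_left_le)
  show "norm z ^ 2 < 1" using z1 by (simp add: power_less_one_iff)
  show "norm (q\<^sup>2) \<le> 1" using q1 by (simp add: norm_power power_le_one)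
qed

lemma TT_feq: "TT z q n = 1 - z\<^sup>2 * q ^ (2 * n + 1) * TT z q (Suc n)"
proof -
  have a: "norm (z\<^sup>2 * q ^ (2 * n + 1)) < 1" using nx(1)[of "2 * n + 1"] nx(2) by linarith
  have e: "z\<^sup>2 * q ^ (2 * n + 1) * q\<^sup>2 = z\<^sup>2 * q ^ (2 * Suc n + 1)"
    by (simp add: power_add power2_eq_square)
  show ?thesis unfolding TT_def e[symmetric] by (rule pt_feq[OF a nx(3)])
qed

lemma TT_bound: "norm (TT z q n) \<le> 1 / (1 - norm z ^ 2)"
  unfolding TT_def by (rule pt_bound[OF nx(1) nx(2) nx(3)])

lemma PS: "(\<Sum>n<Suc N. AA z q n * TT z q n) =
    (\<Sum>n<Suc N. ee z q n) - z\<^sup>2 * q ^ (2 * N + 1) * ee z q N * TT z q (Suc N)"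
proof (induction N)
  case 0
  have "(\<Sum>n<Suc 0. AA z q n * TT z q n) = ee z q 0 * TT z q 0" by (simp add: AA_0)
  also have "TT z q 0 = 1 - z\<^sup>2 * q ^ (2 * 0 + 1) * TT z q (Suc 0)" by (rule TT_feq)
  finally show ?case by (simp add: algebra_simps)
next
  case (Suc N)
  have "(\<Sum>n<Suc (Suc N). AA z q n * TT z q n) = (\<Sum>n<Suc N. AA z q n * TT z q n) + AA z q (Suc N) * TT z q (Suc N)"
    by simp
  also have "\<dots> = (\<Sum>n<Suc N. ee z q n) + ee z q (Suc N) * TT z q (Suc N)"
    unfolding Suc.IH AA_Suc by (simp add: algebra_simps)
  also have "\<dots> = (\<Sum>n<Suc (Suc N). ee z q n) - z\<^sup>2 * q ^ (2 * Suc N + 1) * ee z q (Suc N) * TT z q (Suc (Suc N))"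
    by (subst TT_feq[of "Suc N"]) (simp add: algebra_simps)
  finally show ?case .
qed

lemma summable_ss: "summable (ss z q)"
proof (rule summable_comparison_test)
  show "\<exists>N. \<forall>n\<ge>N. norm (ss z q n) \<le> RR ^ n * norm q ^ (n\<^sup>2)"
  proof (intro exI allI impI)
    fix n :: nat
    have a: "norm ((- z) ^ n) \<le> 1" using z1 by (simp add: norm_power power_le_one)
    have b: "norm q ^ (n\<^sup>2 + n) \<le> norm q ^ (n\<^sup>2)"
      by (rule power_decreasing) (use q1 in auto)
    have "norm (ss z q n) = norm (cc z q n) * norm ((- z) ^ n) * norm q ^ (n\<^sup>2 + n)"
      by (simp add: ss_def norm_mult norm_power)
    also have "\<dots> \<le> RR ^ n * 1 * norm q ^ (n\<^sup>2)"
      by (intro mult_mono norm_cc a b) (use RR_pos[THEN less_imp_le] in auto)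
    finally show "norm (ss z q n) \<le> RR ^ n * norm q ^ (n\<^sup>2)" by simp
  qed
qed (rule summ_gauss, use q1 RR_pos in auto)

lemma summable_ee: "summable (ee z q)"
proof -
  have "summable (\<lambda>n. ss z q n + uu z q n)" by (intro summable_add summable_ss summable_uu)
  thus ?thesis by (simp add: ee_split[abs_def])
qed

lemma main_sum: "(\<Sum>n. AA z q n * TT z q n) = (\<Sum>n. ss z q n) + (\<Sum>n. uu z q n)"
proof -
  define B where "B = 1 / (1 - norm z ^ 2)"
  have e0: "ee z q \<longlonglongrightarrow> 0" by (rule summable_LIMSEQ_zero[OF summable_ee])
  have r0: "(\<lambda>N. z\<^sup>2 * q ^ (2 * N + 1) * ee z q N * TT z q (Suc N)) \<longlonglongrightarrow> 0"
  proof (rule Lim_null_comparison)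
    show "eventually (\<lambda>N. norm (z\<^sup>2 * q ^ (2 * N + 1) * ee z q N * TT z q (Suc N)) \<le> norm (ee z q N) * B) sequentially"
    proof (intro always_eventually allI)
      fix N
      have a: "norm (z\<^sup>2 * q ^ (2 * N + 1)) \<le> 1" using nx(1)[of "2 * N + 1"] nx(2) by linarith
      have "norm (z\<^sup>2 * q ^ (2 * N + 1) * ee z q N * TT z q (Suc N)) =
          norm (z\<^sup>2 * q ^ (2 * N + 1)) * norm (ee z q N) * norm (TT z q (Suc N))"
        by (simp add: norm_mult)
      also have "\<dots> \<le> 1 * norm (ee z q N) * B"
        unfolding B_def by (intro mult_mono a TT_bound order_refl) auto
      finally show "norm (z\<^sup>2 * q ^ (2 * N + 1) * ee z q N * TT z q (Suc N)) \<le> norm (ee z q N) * B"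
        by simp
    qed
    show "(\<lambda>N. norm (ee z q N) * B) \<longlonglongrightarrow> 0"
      using tendsto_mult_right[OF tendsto_norm[OF e0], of B] by simp
  qed
  have "(\<lambda>N. \<Sum>n<Suc N. AA z q n * TT z q n) \<longlonglongrightarrow> suminf (ee z q) - 0"
  proof -
    have "(\<lambda>N. \<Sum>n<Suc N. ee z q n) \<longlonglongrightarrow> suminf (ee z q)"
      using LIMSEQ_Suc[OF summable_LIMSEQ[OF summable_ee]] .
    thus ?thesis unfolding PS by (intro tendsto_diff r0)
  qed
  hence "(\<lambda>N. \<Sum>n\<le>N. AA z q n * TT z q n) \<longlonglongrightarrow> suminf (ee z q)"
    by (simp add: lessThan_Suc_atMost)
  hence "(\<lambda>N. \<Sum>n<N. AA z q n * TT z q n) \<longlonglongrightarrow> suminf (ee z q)"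
    using LIMSEQ_lessThan_iff_atMost by blast
  hence "(\<lambda>n. AA z q n * TT z q n) sums suminf (ee z q)" by (simp add: sums_def)
  hence 1: "(\<Sum>n. AA z q n * TT z q n) = suminf (ee z q)" by (rule sums_unique[symmetric])
  have eeq: "ee z q = (\<lambda>n. ss z q n + uu z q n)" by (rule ext) (rule ee_split)
  show ?thesis unfolding 1 eeq by (rule suminf_add[OF summable_ss summable_uu, symmetric])
qed

end

theorem corollary3p3:
  fixes q z :: complex
  assumes "norm q < 1" and "norm z < 1"
    and "\<And>j::nat. j \<ge> 1 \<Longrightarrow> - z * q ^ j \<noteq> 1"
  shows "qpoch_inf (z * q) q / qpoch_inf (- z * q) q
      + (\<Sum>n. qpoch (-1) q n * qpoch z q n / (qpoch q q n * qpoch (- z * q) q n)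
              * (- z) ^ n * q ^ (n\<^sup>2 + n))
    = (\<Sum>n. qpoch (-1) q n * qpoch z q n / (qpoch q q n * qpoch (- z * q) q n)
              * (1 + q ^ n + z * q ^ n - z * q ^ (2 * n)) * (- z) ^ n * q ^ (n\<^sup>2)
              * partial_theta (z\<^sup>2 * q ^ (2 * n + 1)) (q\<^sup>2))"
proof -
  interpret zq z q using assms(1,2) by unfold_locales
  have l: "(\<lambda>n. qpoch (-1) q n * qpoch z q n / (qpoch q q n * qpoch (- z * q) q n)
              * (- z) ^ n * q ^ (n\<^sup>2 + n)) = ss z q"
    by (simp add: ss_def cc_def fun_eq_iff)
  have r: "(\<lambda>n. qpoch (-1) q n * qpoch z q n / (qpoch q q n * qpoch (- z * q) q n)
              * (1 + q ^ n + z * q ^ n - z * q ^ (2 * n)) * (- z) ^ n * q ^ (n\<^sup>2)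
              * partial_theta (z\<^sup>2 * q ^ (2 * n + 1)) (q\<^sup>2)) = (\<lambda>n. AA z q n * TT z q n)"
    by (simp add: AA_def TT_def cc_def fun_eq_iff)
  show ?thesis unfolding l r main_sum sum_uu[symmetric] by simp
qed

end
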